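(* Assume all hypotheses of the following setting: $(X_t)_{t\in[0,1]}$ is a centered process as in the context whose KL coefficients $(Z_k)$ are mutually independent, each $Z_k$ sub-Gaussian with mean $0$ and parameter $\sqrt{\lambda_k}$; each eigenfunction $e_k$ is Lipschitz on $[0,1]$ with constant $G(k)$ and $C_{\mathrm M}:=\sup_k\lambda_kG(k)^2<\infty$; $c_g\in\mathbb R$, $K_g,K'_g\ge0$, and the functions $g_t:\mathbb R\to\mathbb R$ ($t\in[0,1]$) satisfy $g_t(x)-g_t(y)\le\max(|e^{c_gx}-e^{c_gy}|,K_g|x-y|)$ and $|g_t(x)-g_s(x)|\le K'_g|t-s|$ for all $x,y\in\mathbb R$, $s,t\in[0,1]$; $S_t=g_t(X_t)$. Let $T\ge1$, $t_1,\dots,t_T\in[0,1]$, $w_1,\dots,w_T\ge0$ with $\sum_iw_i=1$, and $f:\mathbb R^T\to\mathbb R$ with $|f(x)-f(y)|\le\sum_iw_i|x_i-y_i|$ for all $x,y$. For $\epsilon\in(0,1]$ with $L_X(\epsilon)\ge1$, let $M=\big\lceil\max\big(\sqrt{L_X(\epsilon)}/\epsilon,\;K_g'^2/\epsilon^2\big)\big\rceil$ and $c(t)=\lfloor tM\rfloor/M$. Then there is a constant $C$ independent of $\epsilon$, $T$, the $t_i$ and the $w_i$ such that $$\mathbb E\Big[\big(f(S_{c(t_1)},\dots,S_{c(t_T)})-f(S_{t_1},\dots,S_{t_T})\big)^2\Big]\le C\epsilon^2 .$$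
   Context: Standing setup: $(X_t)_{t\in[0,1]}$ is a centered stochastic process with $\mathbb E[X_t^2]<\infty$ whose covariance $k_X(s,t)=\mathbb E[X_sX_t]$ is continuous on $[0,1]^2$. Let $\mathcal K$ be the integral operator $(\mathcal Kf)(t)=\int_0^1k_X(s,t)f(s)\,ds$ on $L^2([0,1])$, with orthonormal eigenfunctions $(e_k)_{k\ge1}$ and eigenvalues $\lambda_1\ge\lambda_2\ge\dots\ge0$. The Karhunen–Loève (KL) expansion is $X_t=\sum_{k\ge1}Z_ke_k(t)$ with $Z_k=\int_0^1X_te_k(t)\,dt$, converging in $L^2(\mathbb P)$ uniformly in $t$; the $Z_k$ are centered and uncorrelated with $\mathbb E[Z_k^2]=\lambda_k$. The truncation index $L_X(\epsilon)$ is the smallest natural number $L$ such that $\mathbb E\big[(\sum_{k=1}^{L}Z_ke_k(t)-X_t)^2\big]\le\epsilon^2$ for all $t\in[0,1]$. A real random variable $W$ with mean $m$ is sub-Gaussian with parameter $s\ge0$ if $\mathbb E[\exp(\theta(W-m))]\le\exp(\theta^2s^2/2)$ for all $\theta\in\mathbb R$. *)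

theory Defs
  imports "HOL-Probability.Probability"
begin

definition KL_coeff :: "(real \<Rightarrow> 'a \<Rightarrow> real) \<Rightarrow> (nat \<Rightarrow> real \<Rightarrow> real) \<Rightarrow> nat \<Rightarrow> 'a \<Rightarrow> real" where
  "KL_coeff X e k \<omega> = (LBINT t=0..1. X t \<omega> * e k t)"

definition sub_gaussian :: "'a measure \<Rightarrow> ('a \<Rightarrow> real) \<Rightarrow> real \<Rightarrow> real \<Rightarrow> bool" where
  "sub_gaussian M W m s \<longleftrightarrow> s \<ge> 0 \<and> integrable M W \<and> (\<integral>\<omega>. W \<omega> \<partial>M) = m \<and>
     (\<forall>\<theta>::real. integrable M (\<lambda>\<omega>. exp (\<theta> * (W \<omega> - m))) \<and>
        (\<integral>\<omega>. exp (\<theta> * (W \<omega> - m)) \<partial>M) \<le> exp (\<theta>^2 * s^2 / 2))"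

definition trunc_index :: "'a measure \<Rightarrow> (real \<Rightarrow> 'a \<Rightarrow> real) \<Rightarrow> (nat \<Rightarrow> real \<Rightarrow> real) \<Rightarrow> real \<Rightarrow> nat" where
  "trunc_index M X e \<epsilon> = (LEAST L::nat. \<forall>t\<in>{0..1}.
      (\<integral>\<omega>. ((\<Sum>k=1..L. KL_coeff X e k \<omega> * e k t) - X t \<omega>)^2 \<partial>M) \<le> \<epsilon>^2)"

end

theory Submission imports Defs begin


definition sqi :: "'a measure \<Rightarrow> ('a \<Rightarrow> real) \<Rightarrow> bool" where
  "sqi M Y \<longleftrightarrow> Y \<in> borel_measurable M \<and> integrable M (\<lambda>\<omega>. (Y \<omega>)^2)"

lemma sqi_prod: assumes "sqi M A" "sqi M B" shows "integrable M (\<lambda>\<omega>. A \<omega> * B \<omega>)"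
proof -
  have i: "integrable M (\<lambda>\<omega>. (A \<omega>)^2 + (B \<omega>)^2)" using assms unfolding sqi_def by auto
  show ?thesis
  proof (rule Bochner_Integration.integrable_bound[OF i])
    show "(\<lambda>\<omega>. A \<omega> * B \<omega>) \<in> borel_measurable M" using assms unfolding sqi_def by auto
    show "AE x in M. norm (A x * B x) \<le> norm ((A x)^2 + (B x)^2)"
    proof (rule AE_I2)
      fix x
      have "2 * \<bar>A x * B x\<bar> \<le> (A x)^2 + (B x)^2"
        using sum_squares_bound[of "\<bar>A x\<bar>" "\<bar>B x\<bar>"] by (simp add: abs_mult power2_eq_square)
      then show "norm (A x * B x) \<le> norm ((A x)^2 + (B x)^2)" by simp
    qed
  qed
qed

lemma sqi_add: assumes "sqi M A" "sqi M B" shows "sqi M (\<lambda>\<omega>. A \<omega> + B \<omega>)"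
proof -
  have "integrable M (\<lambda>\<omega>. (A \<omega>)^2 + (B \<omega>)^2 + 2 * (A \<omega> * B \<omega>))"
    using assms sqi_prod[OF assms] unfolding sqi_def by auto
  moreover have "(\<lambda>\<omega>. (A \<omega> + B \<omega>)^2) = (\<lambda>\<omega>. (A \<omega>)^2 + (B \<omega>)^2 + 2 * (A \<omega> * B \<omega>))"
    by (auto simp: power2_eq_square algebra_simps)
  ultimately show ?thesis using assms unfolding sqi_def by auto
qed

lemma sqi_cmult: assumes "sqi M A" shows "sqi M (\<lambda>\<omega>. c * A \<omega>)"
  using assms unfolding sqi_def by (auto simp: power_mult_distrib)

lemma sqi_multc: assumes "sqi M A" shows "sqi M (\<lambda>\<omega>. A \<omega> * c)"
  using sqi_cmult[OF assms, of c] by (simp add: mult.commute)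

lemma sqi_uminus: assumes "sqi M A" shows "sqi M (\<lambda>\<omega>. - A \<omega>)"
  using sqi_cmult[OF assms, of "-1"] by simp

lemma sqi_diff: assumes "sqi M A" "sqi M B" shows "sqi M (\<lambda>\<omega>. A \<omega> - B \<omega>)"
  using sqi_add[OF assms(1) sqi_uminus[OF assms(2)]] by simp

lemma sqi_sum: assumes "\<And>i. i \<in> I \<Longrightarrow> sqi M (A i)" shows "sqi M (\<lambda>\<omega>. \<Sum>i\<in>I. A i \<omega>)"
  using assms
proof (induction I rule: infinite_finite_induct)
  case (infinite A) then show ?case by (simp add: sqi_def)
next
  case empty then show ?case by (simp add: sqi_def)
next
  case (insert x F) then show ?case by (simp add: sqi_add)
qed

lemma sqi_integrable: assumes "sqi M A" "finite_measure M" shows "integrable M A"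
proof -
  interpret finite_measure M by fact
  have "integrable M (\<lambda>\<omega>. A \<omega> * 1)" using sqi_prod[OF assms(1), of "\<lambda>_. 1"] by (simp add: sqi_def)
  then show ?thesis by simp
qed

lemma x2_exp: "(x::real)^2 \<le> 4 * (exp x + exp (-x))"
proof -
  have k: "(y::real)^2 \<le> 4 * exp y" if "y \<ge> 0" for y
  proof -
    have "y/2 \<le> 1 + y/2" by simp
    also have "\<dots> \<le> exp (y/2)" by (rule exp_ge_add_one_self)
    finally have "(y/2)^2 \<le> (exp (y/2))^2" using that by (intro power_mono) auto
    also have "(exp (y/2))^2 = exp y" by (simp flip: exp_of_nat_mult)
    finally show ?thesis by (simp add: power_divide)
  qed
  show ?thesis
  proof (cases "x \<ge> 0")
    case True with k[of x] show ?thesis by (smt (verit) exp_gt_zero)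
  next
    case False with k[of "-x"] show ?thesis by (smt (verit) exp_gt_zero power2_minus)
  qed
qed

lemma x4_exp: "(x::real)^4 \<le> 256 * (exp x + exp (-x))"
proof -
  have k: "(y::real)^4 \<le> 256 * exp y" if "y \<ge> 0" for y
  proof -
    have "y/4 \<le> 1 + y/4" by simp
    also have "\<dots> \<le> exp (y/4)" by (rule exp_ge_add_one_self)
    finally have "(y/4)^4 \<le> (exp (y/4))^4" using that by (intro power_mono) auto
    also have "(exp (y/4))^4 = exp y" by (simp flip: exp_of_nat_mult)
    finally show ?thesis by (simp add: power_divide)
  qed
  show ?thesis
  proof (cases "x \<ge> 0")
    case True with k[of x] show ?thesis by (smt (verit) exp_gt_zero)
  next
    case False
    have "(-x)^4 = x^4" by simp
    with False k[of "-x"] show ?thesis by (smt (verit) exp_gt_zero)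
  qed
qed

lemma exp_diff_bound: fixes u v :: real shows "\<bar>exp u - exp v\<bar> \<le> \<bar>u - v\<bar> * (exp u + exp v)"
proof -
  have k: "exp b - exp a \<le> (b - a) * exp b" for a b :: real
  proof -
    have "1 + (a - b) \<le> exp (a - b)" by (rule exp_ge_add_one_self)
    then have "(1 + (a - b)) * exp b \<le> exp (a - b) * exp b" by (simp add: mult_right_mono)
    also have "exp (a - b) * exp b = exp a" by (simp flip: exp_add)
    finally show ?thesis by (simp add: algebra_simps)
  qed
  show ?thesis
  proof (cases "u \<le> v")
    case True
    have "\<bar>exp u - exp v\<bar> = exp v - exp u" using True exp_le_cancel_iff[of u v] by linarith
    also have "\<dots> \<le> (v - u) * exp v" by (rule k)
    also have "\<dots> \<le> \<bar>u - v\<bar> * (exp u + exp v)" using True by (intro mult_mono) auto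
    finally show ?thesis .
  next
    case False
    have "\<bar>exp u - exp v\<bar> = exp u - exp v" using False exp_le_cancel_iff[of v u] by linarith
    also have "\<dots> \<le> (u - v) * exp u" by (rule k)
    also have "\<dots> \<le> \<bar>u - v\<bar> * (exp u + exp v)" using False by (intro mult_mono) auto
    finally show ?thesis .
  qed
qed



locale KLsetup = prob_space M for M :: "'a measure" +
  fixes X :: "real \<Rightarrow> 'a \<Rightarrow> real" and e :: "nat \<Rightarrow> real \<Rightarrow> real" and lam :: "nat \<Rightarrow> real" and G :: "nat \<Rightarrow> real"
  assumes joint_meas: "(\<lambda>(t, \<omega>). X t \<omega>) \<in> borel_measurable (restrict_space lborel {0..1} \<Otimes>\<^sub>M M)"
    and centered: "\<forall>t\<in>{0..1}. integrable M (X t) \<and> integrable M (\<lambda>\<omega>. (X t \<omega>)^2)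
                      \<and> (\<integral>\<omega>. X t \<omega> \<partial>M) = 0"
    and cov_cont: "continuous_on ({0..1} \<times> {0..1}) (\<lambda>(s, t). \<integral>\<omega>. X s \<omega> * X t \<omega> \<partial>M)"
    and eigen: "\<forall>k\<ge>1. \<forall>t\<in>{0..1}.
                  (LBINT s=0..1. (\<integral>\<omega>. X s \<omega> * X t \<omega> \<partial>M) * e k s) = lam k * e k t"
    and orthonormal: "\<forall>j\<ge>1. \<forall>k\<ge>1. (LBINT s=0..1. e j s * e k s) = (if j = k then 1 else 0)"
    and lam_nonneg: "\<forall>k\<ge>1. lam k \<ge> 0"
    and KL_conv: "\<forall>\<delta>>0. \<exists>N. \<forall>n\<ge>N. \<forall>t\<in>{0..1}.
                  (\<integral>\<omega>. ((\<Sum>k=1..n. KL_coeff X e k \<omega> * e k t) - X t \<omega>)^2 \<partial>M) \<le> \<delta>"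
    and indep: "indep_vars (\<lambda>_. borel) (KL_coeff X e) {1..}"
    and subg: "\<forall>k\<ge>1. sub_gaussian M (KL_coeff X e k) 0 (sqrt (lam k))"
    and lip: "\<forall>k\<ge>1. \<forall>s\<in>{0..1}. \<forall>t\<in>{0..1}. \<bar>e k s - e k t\<bar> \<le> G k * \<bar>s - t\<bar>"
begin

abbreviation "Z \<equiv> KL_coeff X e"
abbreviation "N \<equiv> restrict_space lborel {0..1::real}"

lemma X_sqi: "s \<in> {0..1} \<Longrightarrow> sqi M (X s)"
  using centered unfolding sqi_def by (auto intro: borel_measurable_integrable)

lemma X_meas[measurable]: "s \<in> {0..1} \<Longrightarrow> X s \<in> borel_measurable M"
  using X_sqi sqi_def by blast

lemma Z_sqi: assumes "k \<ge> 1" shows "sqi M (Z k)"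
proof -
  have sg: "sub_gaussian M (Z k) 0 (sqrt (lam k))" using subg assms by auto
  then have m: "Z k \<in> borel_measurable M" unfolding sub_gaussian_def by (auto intro: borel_measurable_integrable)
  have i: "integrable M (\<lambda>\<omega>. 4 * (exp (Z k \<omega>) + exp (- Z k \<omega>)))"
    using sg[unfolded sub_gaussian_def] spec[of _ 1] spec[of _ "-1"]
    by (intro integrable_mult_right Bochner_Integration.integrable_add) (auto dest: spec[of _ 1] spec[of _ "-1"])
  have "integrable M (\<lambda>\<omega>. (Z k \<omega>)^2)"
    by (rule Bochner_Integration.integrable_bound[OF i]) (use m x2_exp in auto)
  with m show ?thesis unfolding sqi_def by auto
qed

lemma Z_meas[measurable]: "k \<ge> 1 \<Longrightarrow> Z k \<in> borel_measurable M"
  using Z_sqi sqi_def by blast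

lemma V_exists: "\<exists>V. \<forall>s\<in>{0..1}. (\<integral>\<omega>. (X s \<omega>)^2 \<partial>M) \<le> V"
proof -
  have "continuous_on {0..1::real} ((\<lambda>(s, t). \<integral>\<omega>. X s \<omega> * X t \<omega> \<partial>M) \<circ> (\<lambda>s. (s, s)))"
    by (rule continuous_on_compose[OF _ continuous_on_subset[OF cov_cont]])
       (auto intro!: continuous_intros)
  then have "compact (((\<lambda>(s, t). \<integral>\<omega>. X s \<omega> * X t \<omega> \<partial>M) \<circ> (\<lambda>s. (s, s))) ` {0..1})"
    by (intro compact_continuous_image) auto
  then obtain B where "\<forall>y \<in> ((\<lambda>(s, t). \<integral>\<omega>. X s \<omega> * X t \<omega> \<partial>M) \<circ> (\<lambda>s. (s, s))) ` {0..1}. norm y \<le> B"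
    by (meson bounded_iff compact_imp_bounded)
  then show ?thesis
    by (intro exI[of _ B]) (auto simp: power2_eq_square)
qed

lemma G_nonneg: "k \<ge> 1 \<Longrightarrow> G k \<ge> 0"
  using lip[rule_format, of k 1 0] by auto

lemma e_bound: assumes "k \<ge> 1" "s \<in> {0..1}" shows "\<bar>e k s\<bar> \<le> \<bar>e k 0\<bar> + G k"
proof -
  have "\<bar>e k s - e k 0\<bar> \<le> G k * \<bar>s - 0\<bar>" using lip[rule_format, of k s 0] assms by auto
  also have "\<dots> \<le> G k * 1" using assms G_nonneg[OF assms(1)] by (intro mult_left_mono) auto
  finally show ?thesis by simp
qed

lemma e_cont: "k \<ge> 1 \<Longrightarrow> continuous_on {0..1} (e k)"
proof -
  assume k: "k \<ge> 1"
  have "lipschitz_on (G k) {0..1} (e k)"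
    using lip k G_nonneg[OF k] by (auto simp: lipschitz_on_def dist_real_def)
  then show ?thesis by (rule lipschitz_on_continuous_on)
qed

lemma e_measN[measurable]: "k \<ge> 1 \<Longrightarrow> e k \<in> borel_measurable N"
proof -
  assume "k \<ge> 1"
  have "e k \<in> borel_measurable (restrict_space borel {0..1})"
    by (rule borel_measurable_continuous_on_restrict[OF e_cont]) fact
  then show ?thesis
    by (subst measurable_cong_sets[OF sets_restrict_space_cong[OF sets_lborel] refl])
qed

lemma N_finite: "finite_measure N"
  by (rule finite_measureI) (simp add: emeasure_restrict_space space_restrict_space)

lemma intN: "integral\<^sup>L N h = (LBINT s=0..1. h s)"
proof -
  have "(LBINT s=ereal 0..ereal 1. h s) = (LBINT s:{0..1}. h s)" by (rule interval_integral_Icc) simp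
  then show ?thesis by (simp add: set_lebesgue_integral_def integral_restrict_space zero_ereal_def one_ereal_def)
qed

lemma Z_path: "Z k \<omega> = integral\<^sup>L N (\<lambda>s. X s \<omega> * e k s)"
  by (simp add: KL_coeff_def intN)

end


context KLsetup begin

lemma N_sigma: "sigma_finite_measure N"
  using N_finite finite_measure_def by blast

lemma pairNM: "pair_sigma_finite N M"
  unfolding pair_sigma_finite_def using N_sigma sigma_finite_measure_axioms by blast

lemma joint_meas': "(\<lambda>x. X (fst x) (snd x)) \<in> borel_measurable (N \<Otimes>\<^sub>M M)"
  using joint_meas by (simp add: split_beta')

lemma spaceN: "space N = {0..1}"
  by (simp add: space_restrict_space)

lemma fub:
  assumes Y: "sqi M Y" and k: "k \<ge> 1"
  shows "(\<integral>\<omega>. Y \<omega> * Z k \<omega> \<partial>M) = integral\<^sup>L N (\<lambda>s. (\<integral>\<omega>. X s \<omega> * Y \<omega> \<partial>M) * e k s)"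
proof -
  interpret P: pair_sigma_finite N M by (rule pairNM)
  interpret NF: finite_measure N by (rule N_finite)
  obtain V where V: "\<forall>s\<in>{0..1}. (\<integral>\<omega>. (X s \<omega>)^2 \<partial>M) \<le> V" using V_exists by blast
  define f where "f s \<omega> = X s \<omega> * e k s * Y \<omega>" for s \<omega>
  have Ym[measurable]: "Y \<in> borel_measurable M" using Y sqi_def by blast
  have em[measurable]: "e k \<in> borel_measurable N" using k by (rule e_measN)
  have fm: "case_prod f \<in> borel_measurable (N \<Otimes>\<^sub>M M)"
  proof -
    have "(\<lambda>x. X (fst x) (snd x) * e k (fst x) * Y (snd x)) \<in> borel_measurable (N \<Otimes>\<^sub>M M)"
      using joint_meas' by measurable
    then show ?thesis by (simp add: f_def split_beta')
  qed
  define B where "B = \<bar>e k 0\<bar> + G k"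
  have eB: "s \<in> {0..1} \<Longrightarrow> \<bar>e k s\<bar> \<le> B" for s using e_bound[OF k] B_def by auto
  have fint: "integrable M (f s)" if s: "s \<in> {0..1}" for s
  proof -
    have "integrable M (\<lambda>\<omega>. (X s \<omega> * Y \<omega>) * e k s)"
      by (intro integrable_mult_left sqi_prod X_sqi s Y)
    then show ?thesis unfolding f_def by (simp add: ac_simps)
  qed
  have int1: "integrable N (\<lambda>s. \<integral>\<omega>. norm (f s \<omega>) \<partial>M)"
  proof (rule NF.integrable_const_bound[where B="B * (V + (\<integral>\<omega>. (Y \<omega>)^2 \<partial>M))"])
    show "AE s in N. norm (\<integral>\<omega>. norm (f s \<omega>) \<partial>M) \<le> B * (V + (\<integral>\<omega>. (Y \<omega>)^2 \<partial>M))"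
    proof (rule AE_I2)
      fix s assume "s \<in> space N"
      then have s: "s \<in> {0..1}" by (simp add: spaceN)
      have ni: "integrable M (\<lambda>\<omega>. norm (f s \<omega>))" using fint[OF s] by auto
      have "(\<integral>\<omega>. norm (f s \<omega>) \<partial>M) \<le> (\<integral>\<omega>. B * ((X s \<omega>)^2 + (Y \<omega>)^2) \<partial>M)"
      proof (rule integral_mono[OF ni])
        show "integrable M (\<lambda>\<omega>. B * ((X s \<omega>)^2 + (Y \<omega>)^2))"
          using X_sqi[OF s] Y unfolding sqi_def by auto
        fix \<omega>
        have "\<bar>X s \<omega> * Y \<omega>\<bar> \<le> 2 * \<bar>X s \<omega> * Y \<omega>\<bar>" by simp
        also have "\<dots> \<le> (X s \<omega>)^2 + (Y \<omega>)^2"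
          using sum_squares_bound[of "\<bar>X s \<omega>\<bar>" "\<bar>Y \<omega>\<bar>"] by (simp add: abs_mult power2_eq_square mult.assoc)
        finally have "\<bar>X s \<omega> * Y \<omega>\<bar> \<le> (X s \<omega>)^2 + (Y \<omega>)^2" .
        moreover have "\<bar>e k s\<bar> \<le> B" using eB[OF s] .
        ultimately have "\<bar>X s \<omega> * Y \<omega>\<bar> * \<bar>e k s\<bar> \<le> ((X s \<omega>)^2 + (Y \<omega>)^2) * B"
          by (intro mult_mono) auto
        then show "norm (f s \<omega>) \<le> B * ((X s \<omega>)^2 + (Y \<omega>)^2)"
          by (simp add: f_def abs_mult ac_simps)
      qed
      also have "\<dots> = B * ((\<integral>\<omega>. (X s \<omega>)^2 \<partial>M) + (\<integral>\<omega>. (Y \<omega>)^2 \<partial>M))"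
        using X_sqi[OF s] Y unfolding sqi_def by simp
      also have "\<dots> \<le> B * (V + (\<integral>\<omega>. (Y \<omega>)^2 \<partial>M))"
        using V s eB[OF s] by (intro mult_left_mono) auto
      finally show "norm (\<integral>\<omega>. norm (f s \<omega>) \<partial>M) \<le> B * (V + (\<integral>\<omega>. (Y \<omega>)^2 \<partial>M))"
        by simp
    qed
    show "(\<lambda>s. \<integral>\<omega>. norm (f s \<omega>) \<partial>M) \<in> borel_measurable N"
    proof -
      have "(\<lambda>p. norm (case_prod f p)) \<in> borel_measurable (N \<Otimes>\<^sub>M M)" using fm by measurable
      then show ?thesis by (intro borel_measurable_lebesgue_integral) (simp add: split_beta')
    qed
  qed
  have int2: "AE s in N. integrable M (\<lambda>\<omega>. f s \<omega>)"
    by (rule AE_I2) (use fint in \<open>auto simp: spaceN\<close>)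
  have I: "integrable (N \<Otimes>\<^sub>M M) (case_prod f)"
    using P.Fubini_integrable[OF fm] int1 int2 by (simp add: split_beta')
  have "(\<integral>\<omega>. (\<integral>s. f s \<omega> \<partial>N) \<partial>M) = (\<integral>s. (\<integral>\<omega>. f s \<omega> \<partial>M) \<partial>N)"
    by (rule P.Fubini_integral[OF I])
  moreover have "(\<integral>s. f s \<omega> \<partial>N) = Y \<omega> * Z k \<omega>" for \<omega>
    unfolding f_def Z_path by simp
  moreover have "(\<integral>\<omega>. f s \<omega> \<partial>M) = (\<integral>\<omega>. X s \<omega> * Y \<omega> \<partial>M) * e k s" for s
  proof -
    have "(\<lambda>\<omega>. f s \<omega>) = (\<lambda>\<omega>. (X s \<omega> * Y \<omega>) * e k s)" unfolding f_def by (auto simp: ac_simps)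
    then show ?thesis by simp
  qed
  ultimately show ?thesis by simp
qed

lemma EXZ: assumes "k \<ge> 1" "t \<in> {0..1}" shows "(\<integral>\<omega>. X t \<omega> * Z k \<omega> \<partial>M) = lam k * e k t"
  using fub[OF X_sqi[OF assms(2)] assms(1)] eigen assms by (simp add: intN)

lemma EZZ: assumes "j \<ge> 1" "k \<ge> 1"
  shows "(\<integral>\<omega>. Z k \<omega> * Z j \<omega> \<partial>M) = (if j = k then lam k else 0)"
proof -
  have "(\<integral>\<omega>. Z k \<omega> * Z j \<omega> \<partial>M) = integral\<^sup>L N (\<lambda>s. (\<integral>\<omega>. X s \<omega> * Z k \<omega> \<partial>M) * e j s)"
    by (rule fub[OF Z_sqi[OF assms(2)] assms(1)])
  also have "\<dots> = integral\<^sup>L N (\<lambda>s. lam k * (e k s * e j s))"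
    by (rule Bochner_Integration.integral_cong) (auto simp: spaceN EXZ[OF assms(2)])
  also have "\<dots> = lam k * (LBINT s=0..1. e k s * e j s)" by (simp add: intN)
  also have "\<dots> = (if j = k then lam k else 0)" using orthonormal assms by auto
  finally show ?thesis .
qed

end


context KLsetup begin

definition S :: "nat \<Rightarrow> real \<Rightarrow> 'a \<Rightarrow> real" where
  "S n s \<omega> = (\<Sum>k=1..n. Z k \<omega> * e k s)"

lemma S_sqi: "sqi M (S n s)"
  unfolding S_def by (intro sqi_sum sqi_multc Z_sqi) auto

lemma S_meas[measurable]: "S n s \<in> borel_measurable M"
  using S_sqi sqi_def by blast

lemma ES: assumes W: "sqi M W"
  shows "(\<integral>\<omega>. S n s \<omega> * W \<omega> \<partial>M) = (\<Sum>k=1..n. e k s * (\<integral>\<omega>. Z k \<omega> * W \<omega> \<partial>M))"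
proof -
  have "(\<lambda>\<omega>. S n s \<omega> * W \<omega>) = (\<lambda>\<omega>. \<Sum>k=1..n. (Z k \<omega> * W \<omega>) * e k s)"
    unfolding S_def sum_distrib_right by (intro ext sum.cong refl) (simp add: ac_simps)
  then have "(\<integral>\<omega>. S n s \<omega> * W \<omega> \<partial>M) = (\<Sum>k=1..n. (\<integral>\<omega>. (Z k \<omega> * W \<omega>) * e k s \<partial>M))"
    by (simp add: Bochner_Integration.integral_sum integrable_mult_left sqi_prod Z_sqi W)
  also have "\<dots> = (\<Sum>k=1..n. e k s * (\<integral>\<omega>. Z k \<omega> * W \<omega> \<partial>M))"
  proof (intro sum.cong refl)
    fix k
    have "(\<integral>\<omega>. (Z k \<omega> * W \<omega>) * e k s \<partial>M) = (\<integral>\<omega>. Z k \<omega> * W \<omega> \<partial>M) * e k s"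
      by (rule integral_mult_left_zero)
    then show "(\<integral>\<omega>. (Z k \<omega> * W \<omega>) * e k s \<partial>M) = e k s * (\<integral>\<omega>. Z k \<omega> * W \<omega> \<partial>M)"
      by (simp only: mult.commute)
  qed
  finally show ?thesis .
qed

lemma Q_id: assumes s: "s \<in> {0..1}"
  shows "(\<integral>\<omega>. (S n s \<omega> - X s \<omega>)^2 \<partial>M) = (\<integral>\<omega>. (X s \<omega>)^2 \<partial>M) - (\<Sum>k=1..n. lam k * (e k s)^2)"
proof -
  have SS: "(\<integral>\<omega>. S n s \<omega> * S n s \<omega> \<partial>M) = (\<Sum>k=1..n. lam k * (e k s)^2)"
  proof -
    have "(\<integral>\<omega>. S n s \<omega> * S n s \<omega> \<partial>M) = (\<Sum>k=1..n. e k s * (\<integral>\<omega>. Z k \<omega> * S n s \<omega> \<partial>M))"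
      by (rule ES[OF S_sqi])
    also have "\<dots> = (\<Sum>k=1..n. e k s * (\<Sum>j=1..n. e j s * (\<integral>\<omega>. Z j \<omega> * Z k \<omega> \<partial>M)))"
    proof (rule sum.cong[OF refl])
      fix k assume k: "k \<in> {1..n}"
      have "(\<integral>\<omega>. Z k \<omega> * S n s \<omega> \<partial>M) = (\<integral>\<omega>. S n s \<omega> * Z k \<omega> \<partial>M)" by (simp add: mult.commute)
      also have "\<dots> = (\<Sum>j=1..n. e j s * (\<integral>\<omega>. Z j \<omega> * Z k \<omega> \<partial>M))"
        by (rule ES[OF Z_sqi]) (use k in auto)
      finally show "e k s * (\<integral>\<omega>. Z k \<omega> * S n s \<omega> \<partial>M) = e k s * (\<Sum>j=1..n. e j s * (\<integral>\<omega>. Z j \<omega> * Z k \<omega> \<partial>M))"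
        by simp
    qed
    also have "\<dots> = (\<Sum>k=1..n. e k s * (\<Sum>j=1..n. e j s * (if k = j then lam j else 0)))"
      by (intro sum.cong refl) (auto simp: EZZ)
    also have "\<dots> = (\<Sum>k=1..n. lam k * (e k s)^2)"
      by (intro sum.cong refl) (auto simp: if_distrib power2_eq_square cong: if_cong)
    finally show ?thesis .
  qed
  have SX: "(\<integral>\<omega>. S n s \<omega> * X s \<omega> \<partial>M) = (\<Sum>k=1..n. lam k * (e k s)^2)"
  proof -
    have "(\<integral>\<omega>. S n s \<omega> * X s \<omega> \<partial>M) = (\<Sum>k=1..n. e k s * (\<integral>\<omega>. Z k \<omega> * X s \<omega> \<partial>M))"
      by (rule ES[OF X_sqi[OF s]])
    also have "\<dots> = (\<Sum>k=1..n. e k s * (lam k * e k s))"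
    proof (intro sum.cong refl)
      fix k assume k: "k \<in> {1..n}"
      have "(\<integral>\<omega>. Z k \<omega> * X s \<omega> \<partial>M) = (\<integral>\<omega>. X s \<omega> * Z k \<omega> \<partial>M)" by (simp add: mult.commute)
      also have "\<dots> = lam k * e k s" using EXZ[of k s] k s by auto
      finally show "e k s * (\<integral>\<omega>. Z k \<omega> * X s \<omega> \<partial>M) = e k s * (lam k * e k s)" by simp
    qed
    also have "\<dots> = (\<Sum>k=1..n. lam k * (e k s)^2)"
      by (intro sum.cong refl) (auto simp: power2_eq_square)
    finally show ?thesis .
  qed
  have eq: "(\<lambda>\<omega>. (S n s \<omega> - X s \<omega>)^2) = (\<lambda>\<omega>. S n s \<omega> * S n s \<omega> - 2 * (S n s \<omega> * X s \<omega>) + (X s \<omega>)^2)"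
    by (auto simp: power2_eq_square algebra_simps)
  have i1: "integrable M (\<lambda>\<omega>. S n s \<omega> * S n s \<omega>)" by (intro sqi_prod S_sqi)
  have i2: "integrable M (\<lambda>\<omega>. S n s \<omega> * X s \<omega>)" by (intro sqi_prod S_sqi X_sqi s)
  have i3: "integrable M (\<lambda>\<omega>. (X s \<omega>)^2)" using X_sqi[OF s] sqi_def by blast
  show ?thesis unfolding eq using i1 i2 i3 SS SX by simp
qed

lemma Q_nonneg: "0 \<le> (\<integral>\<omega>. (S n s \<omega> - X s \<omega>)^2 \<partial>M)"
  by (rule integral_nonneg_AE) auto

lemma trunc_prop: assumes "\<epsilon> > 0"
  shows "\<forall>t\<in>{0..1}. (\<integral>\<omega>. (S (trunc_index M X e \<epsilon>) t \<omega> - X t \<omega>)^2 \<partial>M) \<le> \<epsilon>^2"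
proof -
  obtain N0 where "\<forall>n\<ge>N0. \<forall>t\<in>{0..1}. (\<integral>\<omega>. ((\<Sum>k=1..n. Z k \<omega> * e k t) - X t \<omega>)^2 \<partial>M) \<le> \<epsilon>^2"
    using KL_conv assms by (meson zero_less_power)
  then have "\<exists>L. \<forall>t\<in>{0..1}. (\<integral>\<omega>. ((\<Sum>k=1..L. Z k \<omega> * e k t) - X t \<omega>)^2 \<partial>M) \<le> \<epsilon>^2"
    by blast
  from LeastI_ex[OF this] show ?thesis unfolding trunc_index_def S_def .
qed

lemma sum_le_V: assumes s: "s \<in> {0..1}"
  shows "(\<Sum>k=1..n. lam k * (e k s)^2) \<le> (\<integral>\<omega>. (X s \<omega>)^2 \<partial>M)"
  using Q_id[OF s, of n] Q_nonneg[of n s] by linarith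

lemma tail: assumes s: "s \<in> {0..1}" and Ln: "L \<le> n"
  shows "(\<Sum>k\<in>{Suc L..n}. lam k * (e k s)^2) \<le> (\<integral>\<omega>. (S L s \<omega> - X s \<omega>)^2 \<partial>M)"
proof -
  have "{1..n} = {1..L} \<union> {Suc L..n}" using Ln by auto
  then have "(\<Sum>k=1..n. lam k * (e k s)^2) = (\<Sum>k=1..L. lam k * (e k s)^2) + (\<Sum>k\<in>{Suc L..n}. lam k * (e k s)^2)"
    by (simp add: sum.union_disjoint)
  then show ?thesis using Q_id[OF s, of n] Q_id[OF s, of L] Q_nonneg[of n s] by linarith
qed

lemma mgf:
  assumes J: "finite J" "J \<subseteq> {1..}"
  shows "integrable M (\<lambda>\<omega>. exp (\<theta> * (\<Sum>k\<in>J. b k * Z k \<omega>)))"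
    and "(\<integral>\<omega>. exp (\<theta> * (\<Sum>k\<in>J. b k * Z k \<omega>)) \<partial>M) \<le> exp (\<theta>^2 * (\<Sum>k\<in>J. (b k)^2 * lam k) / 2)"
proof -
  define Y where "Y k \<omega> = exp (\<theta> * b k * Z k \<omega>)" for k \<omega>
  have eq: "exp (\<theta> * (\<Sum>k\<in>J. b k * Z k \<omega>)) = (\<Prod>k\<in>J. Y k \<omega>)" for \<omega>
    unfolding Y_def by (simp add: sum_distrib_left exp_sum[OF J(1)] mult.assoc)
  have ind: "indep_vars (\<lambda>_. borel) Y J"
    unfolding Y_def
    by (rule indep_vars_compose2[OF indep_vars_subset[OF indep J(2)], where Y="\<lambda>k x. exp (\<theta> * b k * x)"]) auto
  have sgk: "k \<in> J \<Longrightarrow> sub_gaussian M (Z k) 0 (sqrt (lam k))" for k using subg J by auto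
  have Yint: "k \<in> J \<Longrightarrow> integrable M (Y k)" for k
    using sgk[of k] unfolding sub_gaussian_def Y_def by (auto simp: mult.assoc dest!: spec[of _ "\<theta> * b k"])
  have Yb: "k \<in> J \<Longrightarrow> (\<integral>\<omega>. Y k \<omega> \<partial>M) \<le> exp ((\<theta> * b k)^2 * lam k / 2)" for k
  proof -
    assume k: "k \<in> J"
    have "lam k \<ge> 0" using lam_nonneg J k by auto
    then show ?thesis using sgk[OF k] unfolding sub_gaussian_def Y_def
      by (auto simp: mult.assoc dest!: spec[of _ "\<theta> * b k"])
  qed
  show "integrable M (\<lambda>\<omega>. exp (\<theta> * (\<Sum>k\<in>J. b k * Z k \<omega>)))"
    unfolding eq using indep_vars_integrable[OF J(1) ind Yint] by simp
  have "(\<integral>\<omega>. exp (\<theta> * (\<Sum>k\<in>J. b k * Z k \<omega>)) \<partial>M) = (\<Prod>k\<in>J. (\<integral>\<omega>. Y k \<omega> \<partial>M))"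
    unfolding eq using indep_vars_lebesgue_integral[OF J(1) ind Yint] by simp
  also have "\<dots> \<le> (\<Prod>k\<in>J. exp ((\<theta> * b k)^2 * lam k / 2))"
    by (rule prod_mono) (use Yb in \<open>auto simp: Y_def intro!: integral_nonneg_AE\<close>)
  also have "\<dots> = exp (\<theta>^2 * (\<Sum>k\<in>J. (b k)^2 * lam k) / 2)"
    by (simp add: exp_sum[OF J(1), symmetric] sum_distrib_left sum_divide_distrib power_mult_distrib ac_simps)
  finally show "(\<integral>\<omega>. exp (\<theta> * (\<Sum>k\<in>J. b k * Z k \<omega>)) \<partial>M) \<le> exp (\<theta>^2 * (\<Sum>k\<in>J. (b k)^2 * lam k) / 2)" .
qed

end


context KLsetup begin

lemma exp_moment:
  assumes s: "s \<in> {0..1}" and V: "\<forall>s\<in>{0..1}. (\<integral>\<omega>. (X s \<omega>)^2 \<partial>M) \<le> V"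
  shows "(\<integral>\<^sup>+\<omega>. ennreal (exp (4 * a * S n s \<omega>)) \<partial>M) \<le> ennreal (exp (8 * a^2 * V))"
proof -
  have eq: "4 * a * S n s \<omega> = (4 * a) * (\<Sum>k\<in>{1..n}. e k s * Z k \<omega>)" for \<omega>
    by (simp add: S_def mult.commute)
  have J: "finite {1..n}" "{1..n} \<subseteq> {1::nat..}" by auto
  note m1 = mgf(1)[OF J, of "4*a" "\<lambda>k. e k s"] and m2 = mgf(2)[OF J, of "4*a" "\<lambda>k. e k s"]
  have "(\<integral>\<^sup>+\<omega>. ennreal (exp (4 * a * S n s \<omega>)) \<partial>M) = ennreal (\<integral>\<omega>. exp (4 * a * S n s \<omega>) \<partial>M)"
    unfolding eq by (rule nn_integral_eq_integral[OF m1]) auto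
  also have "\<dots> \<le> ennreal (exp ((4*a)^2 * (\<Sum>k\<in>{1..n}. (e k s)^2 * lam k) / 2))"
    unfolding eq using m2 by (rule ennreal_leI)
  also have "\<dots> \<le> ennreal (exp (8 * a^2 * V))"
  proof (intro ennreal_leI iffD2[OF exp_le_cancel_iff])
    have "(\<Sum>k\<in>{1..n}. (e k s)^2 * lam k) \<le> V"
      using order_trans[OF sum_le_V[OF s, of n] V[rule_format, OF s]] by (simp add: mult.commute)
    then have "16 * a^2 * (\<Sum>k\<in>{1..n}. (e k s)^2 * lam k) \<le> 16 * a^2 * V"
      by (intro mult_left_mono) auto
    then show "(4*a)^2 * (\<Sum>k\<in>{1..n}. (e k s)^2 * lam k) / 2 \<le> 8 * a^2 * V"
      by (simp add: power_mult_distrib)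
  qed
  finally show ?thesis .
qed

lemma fourth_moment:
  assumes \<sigma>: "\<sigma> > 0" and sig: "(\<Sum>k=1..n. lam k * (e k c - e k t)^2) \<le> \<sigma>^2"
  shows "(\<integral>\<^sup>+\<omega>. ennreal ((S n c \<omega> - S n t \<omega>)^4) \<partial>M) \<le> ennreal (1536 * \<sigma>^4)"
proof -
  define b where "b k = e k c - e k t" for k
  have eq: "S n c \<omega> - S n t \<omega> = (\<Sum>k\<in>{1..n}. b k * Z k \<omega>)" for \<omega>
    by (simp add: S_def b_def sum_subtractf[symmetric] algebra_simps)
  have J: "finite {1..n}" "{1..n} \<subseteq> {1::nat..}" by auto
  define D where "D \<omega> = (\<Sum>k\<in>{1..n}. b k * Z k \<omega>)" for \<omega>
  have sb: "(\<Sum>k\<in>{1..n}. (b k)^2 * lam k) \<le> \<sigma>^2" using sig by (simp add: b_def mult.commute)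
  have bnd: "(\<integral>\<omega>. exp (\<theta> * D \<omega>) \<partial>M) \<le> 3" if "\<theta>^2 = 1/\<sigma>^2" for \<theta>
  proof -
    have "(\<integral>\<omega>. exp (\<theta> * D \<omega>) \<partial>M) \<le> exp (\<theta>^2 * (\<Sum>k\<in>{1..n}. (b k)^2 * lam k) / 2)"
      unfolding D_def by (rule mgf(2)[OF J])
    also have "\<dots> \<le> exp 1"
    proof (rule iffD2[OF exp_le_cancel_iff])
      have "\<theta>^2 * (\<Sum>k\<in>{1..n}. (b k)^2 * lam k) \<le> \<theta>^2 * \<sigma>^2" using sb by (intro mult_left_mono) auto
      also have "\<dots> = 1" using that \<sigma> by simp
      finally show "\<theta>^2 * (\<Sum>k\<in>{1..n}. (b k)^2 * lam k) / 2 \<le> 1" by simp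
    qed
    also have "\<dots> \<le> 3" by (rule exp_le)
    finally show ?thesis .
  qed
  have i1: "integrable M (\<lambda>\<omega>. exp ((1/\<sigma>) * D \<omega>))" unfolding D_def by (rule mgf(1)[OF J])
  have i2: "integrable M (\<lambda>\<omega>. exp ((-1/\<sigma>) * D \<omega>))" unfolding D_def by (rule mgf(1)[OF J])
  have pw: "(D \<omega>)^4 \<le> 256 * \<sigma>^4 * (exp ((1/\<sigma>) * D \<omega>) + exp ((-1/\<sigma>) * D \<omega>))" for \<omega>
  proof -
    have "(D \<omega> / \<sigma>)^4 \<le> 256 * (exp (D \<omega> / \<sigma>) + exp (- (D \<omega> / \<sigma>)))" by (rule x4_exp)
    then have "\<sigma>^4 * (D \<omega> / \<sigma>)^4 \<le> \<sigma>^4 * (256 * (exp (D \<omega> / \<sigma>) + exp (- (D \<omega> / \<sigma>))))"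
      by (intro mult_left_mono) auto
    then show ?thesis using \<sigma> by (simp add: power_divide) (simp add: algebra_simps)
  qed
  have "(\<integral>\<^sup>+\<omega>. ennreal ((S n c \<omega> - S n t \<omega>)^4) \<partial>M) = (\<integral>\<^sup>+\<omega>. ennreal ((D \<omega>)^4) \<partial>M)"
    by (simp add: eq D_def)
  also have "\<dots> \<le> (\<integral>\<^sup>+\<omega>. ennreal (256 * \<sigma>^4 * (exp ((1/\<sigma>) * D \<omega>) + exp ((-1/\<sigma>) * D \<omega>))) \<partial>M)"
    by (intro nn_integral_mono ennreal_leI pw)
  also have "\<dots> = ennreal (\<integral>\<omega>. 256 * \<sigma>^4 * (exp ((1/\<sigma>) * D \<omega>) + exp ((-1/\<sigma>) * D \<omega>)) \<partial>M)"
    by (rule nn_integral_eq_integral) (use i1 i2 in auto)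
  also have "\<dots> = ennreal (256 * \<sigma>^4 * ((\<integral>\<omega>. exp ((1/\<sigma>) * D \<omega>) \<partial>M) + (\<integral>\<omega>. exp ((-1/\<sigma>) * D \<omega>) \<partial>M)))"
    using i1 i2 by simp
  also have "\<dots> \<le> ennreal (256 * \<sigma>^4 * (3 + 3))"
    using bnd[of "1/\<sigma>"] bnd[of "-1/\<sigma>"] \<sigma>
    by (intro ennreal_leI mult_left_mono add_mono) (auto simp: power_divide)
  finally show ?thesis by simp
qed

lemma fatou:
  assumes c: "c \<in> {0..1}" and t: "t \<in> {0..1}"
    and hc: "continuous_on UNIV (hp :: real \<times> real \<Rightarrow> real)"
    and bound: "\<forall>n\<ge>L. (\<integral>\<^sup>+\<omega>. ennreal (hp (S n c \<omega>, S n t \<omega>)) \<partial>M) \<le> B"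
  shows "(\<integral>\<^sup>+\<omega>. ennreal (hp (X c \<omega>, X t \<omega>)) \<partial>M) \<le> B"
proof -
  define u where "u n \<omega> = (S n c \<omega> - X c \<omega>)^2 + (S n t \<omega> - X t \<omega>)^2" for n \<omega>
  have ui: "integrable M (u n)" for n
    using sqi_diff[OF S_sqi X_sqi[OF c], of n] sqi_diff[OF S_sqi X_sqi[OF t], of n]
    unfolding u_def sqi_def by auto
  have lim: "(\<lambda>n. (\<integral>\<omega>. norm (u n \<omega>) \<partial>M)) \<longlonglongrightarrow> 0"
  proof (unfold lim_sequentially, intro allI impI)
    fix r :: real assume r: "r > 0"
    obtain N0 where N0: "\<forall>n\<ge>N0. \<forall>t\<in>{0..1}. (\<integral>\<omega>. ((\<Sum>k=1..n. Z k \<omega> * e k t) - X t \<omega>)^2 \<partial>M) \<le> r/4"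
      using KL_conv r by (meson zero_less_divide_iff zero_less_numeral)
    show "\<exists>no. \<forall>n\<ge>no. dist (\<integral>\<omega>. norm (u n \<omega>) \<partial>M) 0 < r"
    proof (intro exI allI impI)
      fix n assume n: "n \<ge> N0"
      have "(\<integral>\<omega>. norm (u n \<omega>) \<partial>M) = (\<integral>\<omega>. u n \<omega> \<partial>M)"
        by (rule Bochner_Integration.integral_cong) (auto simp: u_def)
      also have "\<dots> = (\<integral>\<omega>. (S n c \<omega> - X c \<omega>)^2 \<partial>M) + (\<integral>\<omega>. (S n t \<omega> - X t \<omega>)^2 \<partial>M)"
        unfolding u_def
        using sqi_diff[OF S_sqi X_sqi[OF c], of n] sqi_diff[OF S_sqi X_sqi[OF t], of n]
        unfolding sqi_def by (intro Bochner_Integration.integral_add) auto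
      also have "\<dots> \<le> r/4 + r/4"
        using N0[rule_format, OF n c] N0[rule_format, OF n t] unfolding S_def by (intro add_mono) auto
      finally have le: "(\<integral>\<omega>. norm (u n \<omega>) \<partial>M) \<le> r/2" by simp
      have "0 \<le> (\<integral>\<omega>. norm (u n \<omega>) \<partial>M)" by (rule integral_nonneg_AE) auto
      with le r show "dist (\<integral>\<omega>. norm (u n \<omega>) \<partial>M) 0 < r" by (simp add: dist_real_def)
    qed
  qed
  obtain r where r: "strict_mono r" and ae: "AE \<omega> in M. (\<lambda>n. u (r n) \<omega>) \<longlonglongrightarrow> 0"
    using tendsto_L1_AE_subseq[OF ui lim] by blast
  have conv: "(\<lambda>n. S (r n) s \<omega>) \<longlonglongrightarrow> X s \<omega>"
    if lu: "(\<lambda>n. u (r n) \<omega>) \<longlonglongrightarrow> 0" and s: "s = c \<or> s = t" for s \<omega>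
  proof -
    have "(\<lambda>n. S (r n) s \<omega> - X s \<omega>) \<longlonglongrightarrow> 0"
    proof (rule Lim_null_comparison)
      show "(\<lambda>n. sqrt (u (r n) \<omega>)) \<longlonglongrightarrow> 0" using tendsto_real_sqrt[OF lu] by simp
      show "\<forall>\<^sub>F n in sequentially. norm (S (r n) s \<omega> - X s \<omega>) \<le> sqrt (u (r n) \<omega>)"
      proof (rule always_eventually, rule allI)
        fix n
        have "(S (r n) s \<omega> - X s \<omega>)^2 \<le> u (r n) \<omega>" using s by (auto simp: u_def)
        then have "sqrt ((S (r n) s \<omega> - X s \<omega>)^2) \<le> sqrt (u (r n) \<omega>)" by (rule real_sqrt_le_mono)
        then show "norm (S (r n) s \<omega> - X s \<omega>) \<le> sqrt (u (r n) \<omega>)" by simp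
      qed
    qed
    then show ?thesis by (simp add: Lim_null[symmetric])
  qed
  have hm: "hp \<in> borel_measurable borel" by (rule borel_measurable_continuous_onI[OF hc])
  have meas: "(\<lambda>\<omega>. ennreal (hp (S n c \<omega>, S n t \<omega>))) \<in> borel_measurable M" for n
    using hm by measurable
  have "(\<integral>\<^sup>+\<omega>. ennreal (hp (X c \<omega>, X t \<omega>)) \<partial>M) = (\<integral>\<^sup>+\<omega>. liminf (\<lambda>n. ennreal (hp (S (r n) c \<omega>, S (r n) t \<omega>))) \<partial>M)"
  proof (rule nn_integral_cong_AE)
    show "AE \<omega> in M. ennreal (hp (X c \<omega>, X t \<omega>)) = liminf (\<lambda>n. ennreal (hp (S (r n) c \<omega>, S (r n) t \<omega>)))"
      using ae
    proof eventually_elim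
      case (elim \<omega>)
      have "((\<lambda>n. (S (r n) c \<omega>, S (r n) t \<omega>)) \<longlongrightarrow> (X c \<omega>, X t \<omega>)) sequentially"
        by (intro tendsto_Pair conv elim) auto
      then have "((\<lambda>n. hp (S (r n) c \<omega>, S (r n) t \<omega>)) \<longlongrightarrow> hp (X c \<omega>, X t \<omega>)) sequentially"
        by (rule isCont_tendsto_compose[rotated])
           (use hc in \<open>simp add: continuous_on_eq_continuous_at\<close>)
      then have "((\<lambda>n. ennreal (hp (S (r n) c \<omega>, S (r n) t \<omega>))) \<longlongrightarrow> ennreal (hp (X c \<omega>, X t \<omega>))) sequentially"
        by (rule tendsto_ennrealI)
      then show ?case by (simp add: lim_imp_Liminf)
    qed
  qed
  also have "\<dots> \<le> liminf (\<lambda>n. (\<integral>\<^sup>+\<omega>. ennreal (hp (S (r n) c \<omega>, S (r n) t \<omega>)) \<partial>M))"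
    by (rule nn_integral_liminf) (rule meas)
  also have "\<dots> \<le> limsup (\<lambda>n. (\<integral>\<^sup>+\<omega>. ennreal (hp (S (r n) c \<omega>, S (r n) t \<omega>)) \<partial>M))"
    by (rule Liminf_le_Limsup) simp
  also have "\<dots> \<le> B"
  proof (rule Limsup_bounded)
    have "eventually (\<lambda>n. r n \<ge> L) sequentially"
      using eventually_ge_at_top[of L] by eventually_elim (use seq_suble[OF r] order_trans in blast)
    then show "eventually (\<lambda>n. (\<integral>\<^sup>+\<omega>. ennreal (hp (S (r n) c \<omega>, S (r n) t \<omega>)) \<partial>M) \<le> B) sequentially"
      by eventually_elim (use bound in blast)
  qed
  finally show ?thesis .
qed

end


lemma jensen_sq:
  fixes w a :: "nat \<Rightarrow> real"
  assumes "finite I" "\<forall>i\<in>I. w i \<ge> 0" "(\<Sum>i\<in>I. w i) = 1"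
  shows "(\<Sum>i\<in>I. w i * a i)^2 \<le> (\<Sum>i\<in>I. w i * (a i)^2)"
proof -
  define m where "m = (\<Sum>i\<in>I. w i * a i)"
  have "0 \<le> (\<Sum>i\<in>I. w i * (a i - m)^2)" using assms by (intro sum_nonneg) auto
  also have "\<dots> = (\<Sum>i\<in>I. w i * (a i)^2) - 2 * m * (\<Sum>i\<in>I. w i * a i) + m^2 * (\<Sum>i\<in>I. w i)"
    by (simp add: power2_eq_square algebra_simps sum.distrib sum_subtractf sum_distrib_left sum_distrib_right)
  also have "\<dots> = (\<Sum>i\<in>I. w i * (a i)^2) - m^2" using assms by (simp add: m_def power2_eq_square)
  finally show ?thesis by (simp add: m_def)
qed

lemma pw_real:
  fixes x y T1 T2 a K \<epsilon> :: real
  assumes \<epsilon>: "\<epsilon> > 0" and T1: "T1^2 \<le> \<epsilon>^2" and K: "K \<ge> 0"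
    and T2: "\<bar>T2\<bar> \<le> max \<bar>exp (a * x) - exp (a * y)\<bar> (K * \<bar>x - y\<bar>)"
  shows "(T1 + T2)^2 \<le> 2 * \<epsilon>^2 + (a^2 / \<epsilon>^2 + K^2 / \<epsilon>^2) * (x - y)^4
            + 8 * a^2 * \<epsilon>^2 * exp (4 * a * x) + 8 * a^2 * \<epsilon>^2 * exp (4 * a * y) + K^2 * \<epsilon>^2"
proof -
  define E where "E = exp (a * x) - exp (a * y)"
  define p where "p = exp (a * x)"
  define q where "q = exp (a * y)"
  define d where "d = x - y"
  have pq: "p > 0" "q > 0" by (auto simp: p_def q_def)
  have s1: "(T1 + T2)^2 \<le> 2 * T1^2 + 2 * T2^2"
    using sum_squares_bound[of T1 T2] by (simp add: power2_eq_square algebra_simps)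
  have s2: "T2^2 \<le> E^2 + K^2 * d^2"
  proof -
    have "T2^2 = \<bar>T2\<bar>^2" by simp
    also have "\<dots> \<le> (max \<bar>E\<bar> (K * \<bar>d\<bar>))^2" using T2 unfolding E_def d_def
      by (intro power_mono) auto
    also have "\<dots> \<le> E^2 + K^2 * d^2"
      by (cases "\<bar>E\<bar> \<le> K * \<bar>d\<bar>") (auto simp: max_def power_mult_distrib)
    finally show ?thesis .
  qed
  have s3: "E^2 \<le> a^2 * d^2 * (p + q)^2"
  proof -
    have "\<bar>E\<bar> \<le> \<bar>a * x - a * y\<bar> * (p + q)" unfolding E_def p_def q_def by (rule exp_diff_bound)
    also have "\<bar>a * x - a * y\<bar> = \<bar>a\<bar> * \<bar>d\<bar>" by (simp add: d_def abs_mult[symmetric] right_diff_distrib)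
    finally have "\<bar>E\<bar> \<le> \<bar>a\<bar> * \<bar>d\<bar> * (p + q)" .
    then have "\<bar>E\<bar>^2 \<le> (\<bar>a\<bar> * \<bar>d\<bar> * (p + q))^2" by (intro power_mono) auto
    then show ?thesis using pq by (simp add: power_mult_distrib)
  qed
  have s4: "d^2 * (p + q)^2 \<le> (d^4 / \<epsilon>^2 + \<epsilon>^2 * (p + q)^4) / 2"
  proof -
    have "0 \<le> (d^2 / \<epsilon> - \<epsilon> * (p + q)^2)^2" by simp
    also have "(d^2 / \<epsilon> - \<epsilon> * (p + q)^2)^2 = d^4 / \<epsilon>^2 - 2 * (d^2 * (p + q)^2) + \<epsilon>^2 * (p + q)^4"
      using \<epsilon> by (simp add: power2_eq_square field_simps) (simp add: algebra_simps power4_eq_xxxx power2_eq_square)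
    finally show ?thesis by simp
  qed
  have s5: "(p + q)^4 \<le> 8 * (p^4 + q^4)"
  proof -
    have a1: "(p + q)^2 \<le> 2 * (p^2 + q^2)" using sum_squares_bound[of p q] by (simp add: power2_eq_square algebra_simps)
    have a2: "(p^2 + q^2)^2 \<le> 2 * (p^4 + q^4)" using sum_squares_bound[of "p^2" "q^2"]
      by (simp add: power2_eq_square power4_eq_xxxx algebra_simps)
    have "(p + q)^4 = ((p + q)^2)^2" by simp
    also have "\<dots> \<le> (2 * (p^2 + q^2))^2" using a1 by (intro power_mono) auto
    also have "\<dots> = 4 * (p^2 + q^2)^2" by (simp only: power_mult_distrib) simp
    also have "\<dots> \<le> 8 * (p^4 + q^4)" using a2 by simp
    finally show ?thesis .
  qed
  have s6: "d^2 \<le> (d^4 / \<epsilon>^2 + \<epsilon>^2) / 2"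
  proof -
    have "0 \<le> (d^2 / \<epsilon> - \<epsilon>)^2" by simp
    also have "(d^2 / \<epsilon> - \<epsilon>)^2 = d^4 / \<epsilon>^2 - 2 * d^2 + \<epsilon>^2"
      using \<epsilon> by (simp add: power2_eq_square field_simps) (simp add: algebra_simps power4_eq_xxxx power2_eq_square)
    finally show ?thesis by simp
  qed
  have p4: "p^4 = exp (4 * a * x)" "q^4 = exp (4 * a * y)"
    by (simp_all add: p_def q_def flip: exp_of_nat_mult)
  have a2: "a^2 \<ge> 0" "K^2 \<ge> 0" by auto
  have "2 * T2^2 \<le> 2 * (a^2 * (d^2 * (p + q)^2)) + 2 * (K^2 * d^2)"
    using s2 s3 by (simp add: mult.assoc)
  also have "\<dots> \<le> 2 * (a^2 * ((d^4 / \<epsilon>^2 + \<epsilon>^2 * (p + q)^4) / 2)) + 2 * (K^2 * ((d^4 / \<epsilon>^2 + \<epsilon>^2) / 2))"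
    using s4 s6 a2 by (intro add_mono mult_left_mono) auto
  also have "\<dots> \<le> 2 * (a^2 * ((d^4 / \<epsilon>^2 + \<epsilon>^2 * (8 * (p^4 + q^4))) / 2)) + 2 * (K^2 * ((d^4 / \<epsilon>^2 + \<epsilon>^2) / 2))"
    using s5 a2 \<epsilon> by (intro add_mono mult_left_mono divide_right_mono) auto
  also have "\<dots> = (a^2 / \<epsilon>^2 + K^2 / \<epsilon>^2) * d^4 + 8 * a^2 * \<epsilon>^2 * p^4 + 8 * a^2 * \<epsilon>^2 * q^4 + K^2 * \<epsilon>^2"
    using \<epsilon> by (simp add: field_simps) algebra
  finally have "2 * T2^2 \<le> (a^2 / \<epsilon>^2 + K^2 / \<epsilon>^2) * d^4 + 8 * a^2 * \<epsilon>^2 * p^4 + 8 * a^2 * \<epsilon>^2 * q^4 + K^2 * \<epsilon>^2" .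
  with s1 T1 show ?thesis unfolding p4 d_def by linarith
qed



context KLsetup begin

lemma sig_bound:
  assumes CM: "\<forall>k\<ge>1. lam k * (G k)^2 \<le> CM" and \<epsilon>: "\<epsilon> > 0"
    and c: "c \<in> {0..1}" and t: "t \<in> {0..1}"
    and Lct: "real (trunc_index M X e \<epsilon>) * (c - t)^2 \<le> \<epsilon>^2"
    and n: "trunc_index M X e \<epsilon> \<le> n"
  shows "(\<Sum>k=1..n. lam k * (e k c - e k t)^2) \<le> (CM + 4) * \<epsilon>^2"
proof -
  define L where "L = trunc_index M X e \<epsilon>"
  have "0 \<le> lam 1 * (G 1)^2" using lam_nonneg by simp
  then have CM0: "CM \<ge> 0" using CM[rule_format, of 1] by simp
  have Ln: "L \<le> n" using n L_def by simp
  have split: "{1..n} = {1..L} \<union> {Suc L..n}" using n L_def by auto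
  have p1: "(\<Sum>k=1..L. lam k * (e k c - e k t)^2) \<le> CM * \<epsilon>^2"
  proof -
    have "(\<Sum>k=1..L. lam k * (e k c - e k t)^2) \<le> (\<Sum>k=1..L. CM * (c - t)^2)"
    proof (rule sum_mono)
      fix k assume k: "k \<in> {1..L}"
      then have k1: "k \<ge> 1" by auto
      have "\<bar>e k c - e k t\<bar> \<le> G k * \<bar>c - t\<bar>" using lip k1 c t by auto
      then have "\<bar>e k c - e k t\<bar>^2 \<le> (G k * \<bar>c - t\<bar>)^2" by (intro power_mono) auto
      then have "(e k c - e k t)^2 \<le> (G k)^2 * (c - t)^2" by (simp add: power_mult_distrib)
      then have "lam k * (e k c - e k t)^2 \<le> lam k * ((G k)^2 * (c - t)^2)"
        using lam_nonneg k1 by (intro mult_left_mono) auto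
      also have "\<dots> = (lam k * (G k)^2) * (c - t)^2" by simp
      also have "\<dots> \<le> CM * (c - t)^2" using CM k1 by (intro mult_right_mono) auto
      finally show "lam k * (e k c - e k t)^2 \<le> CM * (c - t)^2" .
    qed
    also have "\<dots> = CM * (real L * (c - t)^2)" by simp
    also have "\<dots> \<le> CM * \<epsilon>^2" using Lct CM0 L_def by (intro mult_left_mono) auto
    finally show ?thesis .
  qed
  have p2: "(\<Sum>k\<in>{Suc L..n}. lam k * (e k c - e k t)^2) \<le> 4 * \<epsilon>^2"
  proof -
    have "(\<Sum>k\<in>{Suc L..n}. lam k * (e k c - e k t)^2)
          \<le> (\<Sum>k\<in>{Suc L..n}. 2 * (lam k * (e k c)^2) + 2 * (lam k * (e k t)^2))"
    proof (rule sum_mono)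
      fix k assume k: "k \<in> {Suc L..n}"
      then have "lam k \<ge> 0" using lam_nonneg by auto
      moreover have "(e k c - e k t)^2 \<le> 2 * (e k c)^2 + 2 * (e k t)^2"
        using zero_le_power2[of "e k c + e k t"] by (simp add: power2_eq_square algebra_simps)
      ultimately have "lam k * (e k c - e k t)^2 \<le> lam k * (2 * (e k c)^2 + 2 * (e k t)^2)"
        by (intro mult_left_mono)
      then show "lam k * (e k c - e k t)^2 \<le> 2 * (lam k * (e k c)^2) + 2 * (lam k * (e k t)^2)"
        by (simp add: algebra_simps)
    qed
    also have "\<dots> = 2 * (\<Sum>k\<in>{Suc L..n}. lam k * (e k c)^2) + 2 * (\<Sum>k\<in>{Suc L..n}. lam k * (e k t)^2)"
      by (simp add: sum.distrib sum_distrib_left)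
    also have "\<dots> \<le> 2 * \<epsilon>^2 + 2 * \<epsilon>^2"
    proof -
      have "(\<Sum>k\<in>{Suc L..n}. lam k * (e k c)^2) \<le> \<epsilon>^2"
        using order_trans[OF tail[OF c Ln] trunc_prop[OF \<epsilon>, folded L_def, rule_format, OF c]] .
      moreover have "(\<Sum>k\<in>{Suc L..n}. lam k * (e k t)^2) \<le> \<epsilon>^2"
        using order_trans[OF tail[OF t Ln] trunc_prop[OF \<epsilon>, folded L_def, rule_format, OF t]] .
      ultimately show ?thesis by linarith
    qed
    finally show ?thesis by simp
  qed
  have "(\<Sum>k=1..n. lam k * (e k c - e k t)^2) = (\<Sum>k=1..L. lam k * (e k c - e k t)^2) + (\<Sum>k\<in>{Suc L..n}. lam k * (e k c - e k t)^2)"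
    unfolding split by (rule sum.union_disjoint) auto
  with p1 p2 show ?thesis by (simp add: algebra_simps)
qed

end


context KLsetup begin

lemma per_t:
  fixes g :: "real \<Rightarrow> real \<Rightarrow> real" and a K K' \<epsilon> Mg CM V c t :: real
  assumes V: "\<forall>s\<in>{0..1}. (\<integral>\<omega>. (X s \<omega>)^2 \<partial>M) \<le> V"
    and CM: "\<forall>k\<ge>1. lam k * (G k)^2 \<le> CM"
    and \<epsilon>: "0 < \<epsilon>" "\<epsilon> \<le> 1"
    and Mg1: "sqrt (real (trunc_index M X e \<epsilon>)) / \<epsilon> \<le> Mg" and Mg2: "K'^2 / \<epsilon>^2 \<le> Mg" and Mg3: "1 \<le> Mg"
    and c: "c \<in> {0..1}" and t: "t \<in> {0..1}" and ct: "\<bar>c - t\<bar> \<le> 1 / Mg"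
    and K: "K \<ge> 0" and K': "K' \<ge> 0"
    and g_lip: "\<forall>t\<in>{0..1}. \<forall>x y. g t x - g t y \<le> max \<bar>exp (a * x) - exp (a * y)\<bar> (K * \<bar>x - y\<bar>)"
    and g_time: "\<forall>s\<in>{0..1}. \<forall>t\<in>{0..1}. \<forall>x. \<bar>g t x - g s x\<bar> \<le> K' * \<bar>t - s\<bar>"
  defines "P \<equiv> \<lambda>\<omega>. (2 * \<epsilon>^2 + K^2 * \<epsilon>^2) + (a^2 / \<epsilon>^2 + K^2 / \<epsilon>^2) * (X c \<omega> - X t \<omega>)^4
                 + (8 * a^2 * \<epsilon>^2) * exp (4 * a * X c \<omega>) + (8 * a^2 * \<epsilon>^2) * exp (4 * a * X t \<omega>)"
  shows "\<forall>\<omega>. (g c (X c \<omega>) - g t (X t \<omega>))^2 \<le> P \<omega>"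
    and "P \<in> borel_measurable M"
    and "(\<integral>\<^sup>+\<omega>. ennreal (P \<omega>) \<partial>M)
          \<le> ennreal ((2 + K^2 + (a^2 + K^2) * (1536 * (CM + 4)^2) + 16 * a^2 * exp (8 * a^2 * V)) * \<epsilon>^2)"
proof -
  have Mgpos: "Mg > 0" using Mg3 by simp
  show "\<forall>\<omega>. (g c (X c \<omega>) - g t (X t \<omega>))^2 \<le> P \<omega>"
  proof
    fix \<omega>
    define x where "x = X c \<omega>"
    define y where "y = X t \<omega>"
    define T1 where "T1 = g c x - g t x"
    define T2 where "T2 = g t x - g t y"
    have T1: "T1^2 \<le> \<epsilon>^2"
    proof -
      have "\<bar>T1\<bar> \<le> K' * \<bar>c - t\<bar>" using g_time c t unfolding T1_def by auto
      also have "\<dots> \<le> K' * (1 / Mg)" using ct K' by (intro mult_left_mono) auto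
      finally have "\<bar>T1\<bar>^2 \<le> (K' * (1 / Mg))^2" by (intro power_mono) auto
      also have "\<dots> = K'^2 / Mg^2" by (simp add: power_divide)
      also have "\<dots> \<le> \<epsilon>^2"
      proof -
        have "K'^2 \<le> \<epsilon>^2 * Mg" using Mg2 \<epsilon> by (simp add: divide_le_eq mult.commute)
        also have "\<dots> \<le> \<epsilon>^2 * Mg^2" using Mg3 by (intro mult_left_mono) (auto simp: power2_eq_square)
        finally show ?thesis using Mgpos by (simp add: divide_le_eq)
      qed
      finally show ?thesis by simp
    qed
    have T2: "\<bar>T2\<bar> \<le> max \<bar>exp (a * x) - exp (a * y)\<bar> (K * \<bar>x - y\<bar>)"
    proof -
      have "T2 \<le> max \<bar>exp (a * x) - exp (a * y)\<bar> (K * \<bar>x - y\<bar>)" using g_lip t unfolding T2_def by auto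
      moreover have "- T2 \<le> max \<bar>exp (a * y) - exp (a * x)\<bar> (K * \<bar>y - x\<bar>)" using g_lip t unfolding T2_def by auto
      ultimately show ?thesis by (simp add: abs_minus_commute abs_le_iff)
    qed
    have "(T1 + T2)^2 \<le> 2 * \<epsilon>^2 + (a^2 / \<epsilon>^2 + K^2 / \<epsilon>^2) * (x - y)^4
            + 8 * a^2 * \<epsilon>^2 * exp (4 * a * x) + 8 * a^2 * \<epsilon>^2 * exp (4 * a * y) + K^2 * \<epsilon>^2"
      by (rule pw_real[OF \<epsilon>(1) T1 K T2])
    moreover have "T1 + T2 = g c (X c \<omega>) - g t (X t \<omega>)" unfolding T1_def T2_def x_def y_def by simp
    ultimately show "(g c (X c \<omega>) - g t (X t \<omega>))^2 \<le> P \<omega>" unfolding P_def x_def y_def by simp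
  qed
  have [measurable]: "X c \<in> borel_measurable M" "X t \<in> borel_measurable M" using c t by auto
  show Pm: "P \<in> borel_measurable M" unfolding P_def by measurable
  define L where "L = trunc_index M X e \<epsilon>"
  define \<sigma> where "\<sigma> = sqrt ((CM + 4) * \<epsilon>^2)"
  have "0 \<le> lam 1 * (G 1)^2" using lam_nonneg by simp
  then have CM0: "CM \<ge> 0" using CM[rule_format, of 1] by simp
  have \<sigma>pos: "\<sigma> > 0" unfolding \<sigma>_def using CM0 \<epsilon> by simp
  have \<sigma>2: "\<sigma>^2 = (CM + 4) * \<epsilon>^2" unfolding \<sigma>_def using CM0 by simp
  have Lct: "real L * (c - t)^2 \<le> \<epsilon>^2"
  proof -
    have "(c - t)^2 = \<bar>c - t\<bar>^2" by simp
    also have "\<dots> \<le> (1 / Mg)^2" using ct by (intro power_mono) auto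
    finally have a: "(c - t)^2 \<le> 1 / Mg^2" by (simp add: power_divide)
    have "sqrt (real L) \<le> \<epsilon> * Mg" using Mg1 \<epsilon> unfolding L_def by (simp add: divide_le_eq mult.commute)
    then have "(sqrt (real L))^2 \<le> (\<epsilon> * Mg)^2" by (intro power_mono) auto
    then have b: "real L \<le> \<epsilon>^2 * Mg^2" by (simp add: power_mult_distrib)
    have "real L * (c - t)^2 \<le> (\<epsilon>^2 * Mg^2) * (1 / Mg^2)" using a b by (intro mult_mono) auto
    also have "\<dots> = \<epsilon>^2" using Mgpos by simp
    finally show ?thesis .
  qed
  have D4: "(\<integral>\<^sup>+\<omega>. ennreal ((X c \<omega> - X t \<omega>)^4) \<partial>M) \<le> ennreal (1536 * \<sigma>^4)"
  proof -
    have "(\<integral>\<^sup>+\<omega>. ennreal ((\<lambda>p. (fst p - snd p)^4) (X c \<omega>, X t \<omega>)) \<partial>M) \<le> ennreal (1536 * \<sigma>^4)"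
    proof (rule fatou[OF c t, where L=L])
      show "continuous_on UNIV (\<lambda>p::real\<times>real. (fst p - snd p)^4)" by (intro continuous_intros)
      show "\<forall>n\<ge>L. (\<integral>\<^sup>+\<omega>. ennreal ((\<lambda>p. (fst p - snd p)^4) (S n c \<omega>, S n t \<omega>)) \<partial>M) \<le> ennreal (1536 * \<sigma>^4)"
      proof (intro allI impI)
        fix n assume n: "L \<le> n"
        have "(\<Sum>k=1..n. lam k * (e k c - e k t)^2) \<le> \<sigma>^2"
          unfolding \<sigma>2 by (rule sig_bound[OF CM \<epsilon>(1) c t Lct[unfolded L_def] n[unfolded L_def]])
        from fourth_moment[OF \<sigma>pos this]
        show "(\<integral>\<^sup>+\<omega>. ennreal ((\<lambda>p. (fst p - snd p)^4) (S n c \<omega>, S n t \<omega>)) \<partial>M) \<le> ennreal (1536 * \<sigma>^4)"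
          by simp
      qed
    qed
    then show ?thesis by simp
  qed
  have EXb: "(\<integral>\<^sup>+\<omega>. ennreal (exp (4 * a * X s \<omega>)) \<partial>M) \<le> ennreal (exp (8 * a^2 * V))"
    if s: "s \<in> {0..1}" for s
  proof -
    have "(\<integral>\<^sup>+\<omega>. ennreal ((\<lambda>p. exp (4 * a * fst p)) (X s \<omega>, X s \<omega>)) \<partial>M) \<le> ennreal (exp (8 * a^2 * V))"
    proof (rule fatou[OF s s, where L=0])
      show "continuous_on UNIV (\<lambda>p::real\<times>real. exp (4 * a * fst p))" by (intro continuous_intros)
      show "\<forall>n\<ge>0. (\<integral>\<^sup>+\<omega>. ennreal ((\<lambda>p. exp (4 * a * fst p)) (S n s \<omega>, S n s \<omega>)) \<partial>M) \<le> ennreal (exp (8 * a^2 * V))"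
        using exp_moment[OF s V] by simp
    qed
    then show ?thesis by simp
  qed
  define \<alpha> where "\<alpha> = a^2 / \<epsilon>^2 + K^2 / \<epsilon>^2"
  define \<beta> where "\<beta> = 8 * a^2 * \<epsilon>^2"
  define c0 where "c0 = 2 * \<epsilon>^2 + K^2 * \<epsilon>^2"
  have \<alpha>0: "\<alpha> \<ge> 0" and \<beta>0: "\<beta> \<ge> 0" and c00: "c0 \<ge> 0" unfolding \<alpha>_def \<beta>_def c0_def by auto
  have eqP: "ennreal (P \<omega>) = ennreal c0 + ennreal \<alpha> * ennreal ((X c \<omega> - X t \<omega>)^4)
     + ennreal \<beta> * ennreal (exp (4 * a * X c \<omega>)) + ennreal \<beta> * ennreal (exp (4 * a * X t \<omega>))" for \<omega>
    unfolding P_def \<alpha>_def[symmetric] \<beta>_def[symmetric] c0_def[symmetric]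
    using \<alpha>0 \<beta>0 c00 by (simp add: ennreal_mult ennreal_plus)
  have "(\<integral>\<^sup>+\<omega>. ennreal (P \<omega>) \<partial>M) = (\<integral>\<^sup>+\<omega>. ennreal c0 + ennreal \<alpha> * ennreal ((X c \<omega> - X t \<omega>)^4)
     + ennreal \<beta> * ennreal (exp (4 * a * X c \<omega>)) + ennreal \<beta> * ennreal (exp (4 * a * X t \<omega>)) \<partial>M)"
    by (simp add: eqP)
  also have "\<dots> = ennreal c0 + ennreal \<alpha> * (\<integral>\<^sup>+\<omega>. ennreal ((X c \<omega> - X t \<omega>)^4) \<partial>M)
     + ennreal \<beta> * (\<integral>\<^sup>+\<omega>. ennreal (exp (4 * a * X c \<omega>)) \<partial>M) + ennreal \<beta> * (\<integral>\<^sup>+\<omega>. ennreal (exp (4 * a * X t \<omega>)) \<partial>M)"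
    by (simp add: nn_integral_add nn_integral_cmult emeasure_space_1)
  also have "\<dots> \<le> ennreal c0 + ennreal \<alpha> * ennreal (1536 * \<sigma>^4)
     + ennreal \<beta> * ennreal (exp (8 * a^2 * V)) + ennreal \<beta> * ennreal (exp (8 * a^2 * V))"
    by (intro add_mono mult_left_mono D4 EXb c t order_refl) auto
  also have "\<dots> = ennreal c0 + ennreal (\<alpha> * (1536 * \<sigma>^4))
     + ennreal (\<beta> * exp (8 * a^2 * V)) + ennreal (\<beta> * exp (8 * a^2 * V))"
    by (simp only: ennreal_mult'[OF \<alpha>0] ennreal_mult'[OF \<beta>0])
  also have "\<dots> = ennreal (c0 + \<alpha> * (1536 * \<sigma>^4) + \<beta> * exp (8 * a^2 * V) + \<beta> * exp (8 * a^2 * V))"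
  proof -
    have n1: "0 \<le> \<alpha> * (1536 * \<sigma>^4)" "0 \<le> \<beta> * exp (8 * a^2 * V)" using \<alpha>0 \<beta>0 by auto
    have "ennreal (c0 + \<alpha> * (1536 * \<sigma>^4) + \<beta> * exp (8 * a^2 * V) + \<beta> * exp (8 * a^2 * V))
        = ennreal (c0 + \<alpha> * (1536 * \<sigma>^4) + \<beta> * exp (8 * a^2 * V)) + ennreal (\<beta> * exp (8 * a^2 * V))"
      by (rule ennreal_plus) (use n1 c00 in auto)
    also have "ennreal (c0 + \<alpha> * (1536 * \<sigma>^4) + \<beta> * exp (8 * a^2 * V))
        = ennreal (c0 + \<alpha> * (1536 * \<sigma>^4)) + ennreal (\<beta> * exp (8 * a^2 * V))"
      by (rule ennreal_plus) (use n1 c00 in auto)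
    also have "ennreal (c0 + \<alpha> * (1536 * \<sigma>^4)) = ennreal c0 + ennreal (\<alpha> * (1536 * \<sigma>^4))"
      by (rule ennreal_plus) (use n1 c00 in auto)
    finally show ?thesis by simp
  qed
  also have "c0 + \<alpha> * (1536 * \<sigma>^4) + \<beta> * exp (8 * a^2 * V) + \<beta> * exp (8 * a^2 * V)
      = (2 + K^2 + (a^2 + K^2) * (1536 * (CM + 4)^2) + 16 * a^2 * exp (8 * a^2 * V)) * \<epsilon>^2"
  proof -
    have "\<sigma>^4 = ((CM + 4) * \<epsilon>^2)^2" using \<sigma>2 by (metis power2_eq_square power4_eq_xxxx mult.assoc)
    then show ?thesis unfolding c0_def \<alpha>_def \<beta>_def using \<epsilon> by (simp add: field_simps power2_eq_square)
  qed
  finally show "(\<integral>\<^sup>+\<omega>. ennreal (P \<omega>) \<partial>M)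
          \<le> ennreal ((2 + K^2 + (a^2 + K^2) * (1536 * (CM + 4)^2) + 16 * a^2 * exp (8 * a^2 * V)) * \<epsilon>^2)" .
qed

end

theorem theorem7:
  fixes M :: "'a measure" and X :: "real \<Rightarrow> 'a \<Rightarrow> real"
    and e :: "nat \<Rightarrow> real \<Rightarrow> real" and lam :: "nat \<Rightarrow> real" and G :: "nat \<Rightarrow> real"
    and g :: "real \<Rightarrow> real \<Rightarrow> real" and c_g K_g K'_g :: real
  assumes prob: "prob_space M"
    and joint_meas: "(\<lambda>(t, \<omega>). X t \<omega>) \<in> borel_measurable (restrict_space lborel {0..1} \<Otimes>\<^sub>M M)"
    and centered: "\<forall>t\<in>{0..1}. integrable M (X t) \<and> integrable M (\<lambda>\<omega>. (X t \<omega>)^2)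
                      \<and> (\<integral>\<omega>. X t \<omega> \<partial>M) = 0"
    and cov_cont: "continuous_on ({0..1} \<times> {0..1}) (\<lambda>(s, t). \<integral>\<omega>. X s \<omega> * X t \<omega> \<partial>M)"
    and eigen: "\<forall>k\<ge>1. \<forall>t\<in>{0..1}.
                  (LBINT s=0..1. (\<integral>\<omega>. X s \<omega> * X t \<omega> \<partial>M) * e k s) = lam k * e k t"
    and orthonormal: "\<forall>j\<ge>1. \<forall>k\<ge>1. (LBINT s=0..1. e j s * e k s) = (if j = k then 1 else 0)"
    and lam_nonneg: "\<forall>k\<ge>1. lam k \<ge> 0"
    and lam_decr: "\<forall>k\<ge>1. lam (Suc k) \<le> lam k"
    and KL_conv: "\<forall>\<delta>>0. \<exists>N. \<forall>n\<ge>N. \<forall>t\<in>{0..1}.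
                  (\<integral>\<omega>. ((\<Sum>k=1..n. KL_coeff X e k \<omega> * e k t) - X t \<omega>)^2 \<partial>M) \<le> \<delta>"
    and indep: "prob_space.indep_vars M (\<lambda>_. borel) (KL_coeff X e) {1..}"
    and subg: "\<forall>k\<ge>1. sub_gaussian M (KL_coeff X e k) 0 (sqrt (lam k))"
    and lip: "\<forall>k\<ge>1. \<forall>s\<in>{0..1}. \<forall>t\<in>{0..1}. \<bar>e k s - e k t\<bar> \<le> G k * \<bar>s - t\<bar>"
    and C_M: "bdd_above ((\<lambda>k. lam k * (G k)^2) ` {1..})"
    and K_g: "K_g \<ge> 0" and K'_g: "K'_g \<ge> 0"
    and g_lip: "\<forall>t\<in>{0..1}. \<forall>x y. g t x - g t y \<le> max \<bar>exp (c_g * x) - exp (c_g * y)\<bar> (K_g * \<bar>x - y\<bar>)"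
    and g_time: "\<forall>s\<in>{0..1}. \<forall>t\<in>{0..1}. \<forall>x. \<bar>g t x - g s x\<bar> \<le> K'_g * \<bar>t - s\<bar>"
  shows "\<exists>C::real. \<forall>(T::nat) (tt::nat \<Rightarrow> real) (w::nat \<Rightarrow> real) (f::(nat \<Rightarrow> real) \<Rightarrow> real) (\<epsilon>::real).
           T \<ge> 1 \<longrightarrow> (\<forall>i\<in>{1..T}. tt i \<in> {0..1} \<and> w i \<ge> 0) \<longrightarrow> (\<Sum>i=1..T. w i) = 1 \<longrightarrow>
           (\<forall>x y. \<bar>f x - f y\<bar> \<le> (\<Sum>i=1..T. w i * \<bar>x i - y i\<bar>)) \<longrightarrow>
           0 < \<epsilon> \<longrightarrow> \<epsilon> \<le> 1 \<longrightarrow> trunc_index M X e \<epsilon> \<ge> 1 \<longrightarrow>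
           (let Mg = real_of_int \<lceil>max (sqrt (real (trunc_index M X e \<epsilon>)) / \<epsilon>) (K'_g^2 / \<epsilon>^2)\<rceil>;
                c = (\<lambda>t. real_of_int \<lfloor>t * Mg\<rfloor> / Mg);
                S = (\<lambda>t \<omega>. g t (X t \<omega>))
            in (\<integral>\<^sup>+\<omega>. ennreal ((f (\<lambda>i. S (c (tt i)) \<omega>) - f (\<lambda>i. S (tt i) \<omega>))^2) \<partial>M)
               \<le> ennreal (C * \<epsilon>^2))"

proof -
  have KLs: "KLsetup M X e lam G"
    unfolding KLsetup_def KLsetup_axioms_def
    using prob joint_meas centered cov_cont eigen orthonormal lam_nonneg KL_conv indep subg lip by auto
  interpret KL: KLsetup M X e lam G by (rule KLs)
  obtain V where V: "\<forall>s\<in>{0..1}. (\<integral>\<omega>. (X s \<omega>)^2 \<partial>M) \<le> V" using KL.V_exists by blast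
  obtain CM where CM: "\<forall>k\<ge>1. lam k * (G k)^2 \<le> CM"
    using C_M unfolding bdd_above_def by auto
  define Cst where "Cst = 2 + K_g^2 + (c_g^2 + K_g^2) * (1536 * (CM + 4)^2) + 16 * c_g^2 * exp (8 * c_g^2 * V)"
  show ?thesis
  proof (rule exI[of _ Cst], intro allI impI)
    fix T :: nat and tt w :: "nat \<Rightarrow> real" and f :: "(nat \<Rightarrow> real) \<Rightarrow> real" and \<epsilon> :: real
    assume T: "T \<ge> 1" and H1: "\<forall>i\<in>{1..T}. tt i \<in> {0..1} \<and> w i \<ge> 0" and Hw: "(\<Sum>i=1..T. w i) = 1"
      and Hf: "\<forall>x y. \<bar>f x - f y\<bar> \<le> (\<Sum>i=1..T. w i * \<bar>x i - y i\<bar>)"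
      and \<epsilon>0: "0 < \<epsilon>" and \<epsilon>1: "\<epsilon> \<le> 1" and L1: "trunc_index M X e \<epsilon> \<ge> 1"
    define Mg where "Mg = real_of_int \<lceil>max (sqrt (real (trunc_index M X e \<epsilon>)) / \<epsilon>) (K'_g^2 / \<epsilon>^2)\<rceil>"
    define cc where "cc = (\<lambda>t. real_of_int \<lfloor>t * Mg\<rfloor> / Mg)"
    have Mg1: "sqrt (real (trunc_index M X e \<epsilon>)) / \<epsilon> \<le> Mg" unfolding Mg_def
      by (rule order_trans[OF max.cobounded1 le_of_int_ceiling])
    have Mg2: "K'_g^2 / \<epsilon>^2 \<le> Mg" unfolding Mg_def
      by (rule order_trans[OF max.cobounded2 le_of_int_ceiling])
    have Mg3: "1 \<le> Mg"
    proof -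
      have "1 \<le> sqrt (real (trunc_index M X e \<epsilon>))" using L1 by simp
      also have "\<dots> \<le> sqrt (real (trunc_index M X e \<epsilon>)) / \<epsilon>" using \<epsilon>0 \<epsilon>1
        by (simp add: le_divide_eq mult_left_le)
      finally show ?thesis using Mg1 by simp
    qed
    have Mgpos: "Mg > 0" using Mg3 by simp
    have ccI: "cc t \<in> {0..1}" and ccd: "\<bar>cc t - t\<bar> \<le> 1 / Mg" if t: "t \<in> {0..1}" for t
    proof -
      have a: "real_of_int \<lfloor>t * Mg\<rfloor> \<le> t * Mg" by (rule of_int_floor_le)
      have b: "t * Mg < real_of_int \<lfloor>t * Mg\<rfloor> + 1" by (rule real_of_int_floor_add_one_gt)
      have c0: "0 \<le> real_of_int \<lfloor>t * Mg\<rfloor>" using t Mgpos by simp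
      have "t * Mg \<le> Mg" using t Mgpos by (simp add: mult_left_le_one_le)
      with a have d: "real_of_int \<lfloor>t * Mg\<rfloor> \<le> Mg" by linarith
      show "cc t \<in> {0..1}" unfolding cc_def using d c0 Mgpos by (auto simp: divide_le_eq)
      have "t - cc t = (t * Mg - real_of_int \<lfloor>t * Mg\<rfloor>) / Mg" unfolding cc_def using Mgpos
        by (simp add: field_simps)
      moreover have "t * Mg - real_of_int \<lfloor>t * Mg\<rfloor> \<le> 1" using b by linarith
      moreover have "0 \<le> t * Mg - real_of_int \<lfloor>t * Mg\<rfloor>" using a by linarith
      ultimately have "0 \<le> t - cc t \<and> t - cc t \<le> 1 / Mg" using Mgpos
        by (simp add: divide_right_mono)
      then show "\<bar>cc t - t\<bar> \<le> 1 / Mg" by simp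
    qed
    define P where "P i \<omega> = (2 * \<epsilon>^2 + K_g^2 * \<epsilon>^2) + (c_g^2 / \<epsilon>^2 + K_g^2 / \<epsilon>^2) * (X (cc (tt i)) \<omega> - X (tt i) \<omega>)^4
                 + (8 * c_g^2 * \<epsilon>^2) * exp (4 * c_g * X (cc (tt i)) \<omega>) + (8 * c_g^2 * \<epsilon>^2) * exp (4 * c_g * X (tt i) \<omega>)" for i \<omega>
    have gl: "\<forall>t\<in>{0..1}. \<forall>x y. g t x - g t y \<le> max \<bar>exp (c_g * x) - exp (c_g * y)\<bar> (K_g * \<bar>x - y\<bar>)"
      using g_lip by blast
    note pt = KL.per_t[OF V CM \<epsilon>0 \<epsilon>1 Mg1 Mg2 Mg3 _ _ _ K_g K'_g gl g_time]
    have Pb: "\<forall>\<omega>. (g (cc (tt i)) (X (cc (tt i)) \<omega>) - g (tt i) (X (tt i) \<omega>))^2 \<le> P i \<omega>"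
      and Pm: "P i \<in> borel_measurable M"
      and Pi: "(\<integral>\<^sup>+\<omega>. ennreal (P i \<omega>) \<partial>M) \<le> ennreal (Cst * \<epsilon>^2)"
      if i: "i \<in> {1..T}" for i
    proof -
      have ti: "tt i \<in> {0..1}" using H1 i by auto
      note q = pt[OF ccI[OF ti] ti ccd[OF ti]]
      show "\<forall>\<omega>. (g (cc (tt i)) (X (cc (tt i)) \<omega>) - g (tt i) (X (tt i) \<omega>))^2 \<le> P i \<omega>"
        using q(1) unfolding P_def by simp
      have "(\<lambda>\<omega>. P i \<omega>) \<in> borel_measurable M" using q(2) unfolding P_def by simp
      then show "P i \<in> borel_measurable M" by simp
      show "(\<integral>\<^sup>+\<omega>. ennreal (P i \<omega>) \<partial>M) \<le> ennreal (Cst * \<epsilon>^2)"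
        using q(3) unfolding P_def Cst_def by simp
    qed
    have main: "(\<integral>\<^sup>+\<omega>. ennreal ((f (\<lambda>i. g (cc (tt i)) (X (cc (tt i)) \<omega>)) - f (\<lambda>i. g (tt i) (X (tt i) \<omega>)))^2) \<partial>M)
               \<le> ennreal (Cst * \<epsilon>^2)"
    proof -
      have pw: "ennreal ((f (\<lambda>i. g (cc (tt i)) (X (cc (tt i)) \<omega>)) - f (\<lambda>i. g (tt i) (X (tt i) \<omega>)))^2)
                \<le> (\<Sum>i=1..T. ennreal (w i) * ennreal (P i \<omega>))" for \<omega>
      proof -
        define A where "A i = g (cc (tt i)) (X (cc (tt i)) \<omega>)" for i
        define B where "B i = g (tt i) (X (tt i) \<omega>)" for i
        have "(f A - f B)^2 = \<bar>f A - f B\<bar>^2" by simp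
        also have "\<dots> \<le> (\<Sum>i=1..T. w i * \<bar>A i - B i\<bar>)^2" using Hf by (intro power_mono) auto
        also have "\<dots> \<le> (\<Sum>i=1..T. w i * \<bar>A i - B i\<bar>^2)" using H1 Hw by (intro jensen_sq) auto
        also have "\<dots> \<le> (\<Sum>i=1..T. w i * P i \<omega>)"
        proof (rule sum_mono)
          fix i assume i: "i \<in> {1..T}"
          have "\<bar>A i - B i\<bar>^2 \<le> P i \<omega>" using Pb[OF i] unfolding A_def B_def by simp
          then show "w i * \<bar>A i - B i\<bar>^2 \<le> w i * P i \<omega>" using H1 i by (intro mult_left_mono) auto
        qed
        finally have le: "(f A - f B)^2 \<le> (\<Sum>i=1..T. w i * P i \<omega>)" .
        have Pnn: "i \<in> {1..T} \<Longrightarrow> 0 \<le> P i \<omega>" for i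
          using Pb[of i] order_trans[OF zero_le_power2] by blast
        have "ennreal ((f A - f B)^2) \<le> ennreal (\<Sum>i=1..T. w i * P i \<omega>)" using le by (rule ennreal_leI)
        also have "\<dots> = (\<Sum>i=1..T. ennreal (w i * P i \<omega>))"
          using H1 Pnn by (intro sum_ennreal[symmetric]) auto
        also have "\<dots> = (\<Sum>i=1..T. ennreal (w i) * ennreal (P i \<omega>))"
          using H1 by (intro sum.cong refl ennreal_mult') auto
        finally show ?thesis unfolding A_def B_def .
      qed
      have "(\<integral>\<^sup>+\<omega>. ennreal ((f (\<lambda>i. g (cc (tt i)) (X (cc (tt i)) \<omega>)) - f (\<lambda>i. g (tt i) (X (tt i) \<omega>)))^2) \<partial>M)
            \<le> (\<integral>\<^sup>+\<omega>. (\<Sum>i=1..T. ennreal (w i) * ennreal (P i \<omega>)) \<partial>M)"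
        by (rule nn_integral_mono) (rule pw)
      also have "\<dots> = (\<Sum>i=1..T. ennreal (w i) * (\<integral>\<^sup>+\<omega>. ennreal (P i \<omega>) \<partial>M))"
      proof -
        have m2: "(\<lambda>\<omega>. ennreal (P i \<omega>)) \<in> borel_measurable M" if i: "i \<in> {1..T}" for i
        proof -
          note Pm[OF i, measurable]
          show ?thesis by measurable
        qed
        have m: "(\<lambda>\<omega>. ennreal (w i) * ennreal (P i \<omega>)) \<in> borel_measurable M" if i: "i \<in> {1..T}" for i
        proof -
          note m2[OF i, measurable]
          show ?thesis by measurable
        qed
        have "(\<integral>\<^sup>+\<omega>. (\<Sum>i=1..T. ennreal (w i) * ennreal (P i \<omega>)) \<partial>M)
              = (\<Sum>i=1..T. (\<integral>\<^sup>+\<omega>. ennreal (w i) * ennreal (P i \<omega>) \<partial>M))"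
          by (rule nn_integral_sum) (rule m)
        also have "\<dots> = (\<Sum>i=1..T. ennreal (w i) * (\<integral>\<^sup>+\<omega>. ennreal (P i \<omega>) \<partial>M))"
          by (intro sum.cong refl nn_integral_cmult m2)
        finally show ?thesis .
      qed
      also have "\<dots> \<le> (\<Sum>i=1..T. ennreal (w i) * ennreal (Cst * \<epsilon>^2))"
        using Pi by (intro sum_mono mult_left_mono) auto
      also have "\<dots> = ennreal (Cst * \<epsilon>^2)"
      proof -
        have "(\<Sum>i=1..T. ennreal (w i)) = ennreal (\<Sum>i=1..T. w i)" using H1 by (intro sum_ennreal) auto
        then have s1: "(\<Sum>i=1..T. ennreal (w i)) = 1" using Hw by simp
        show ?thesis by (simp only: sum_distrib_right[symmetric] s1 mult_1)
      qed
      finally show ?thesis .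
    qed
    then show "(let Mg = real_of_int \<lceil>max (sqrt (real (trunc_index M X e \<epsilon>)) / \<epsilon>) (K'_g^2 / \<epsilon>^2)\<rceil>;
                c = (\<lambda>t. real_of_int \<lfloor>t * Mg\<rfloor> / Mg);
                S = (\<lambda>t \<omega>. g t (X t \<omega>))
            in (\<integral>\<^sup>+\<omega>. ennreal ((f (\<lambda>i. S (c (tt i)) \<omega>) - f (\<lambda>i. S (tt i) \<omega>))^2) \<partial>M)
               \<le> ennreal (Cst * \<epsilon>^2))"
      unfolding Let_def cc_def Mg_def .
  qed
qed

end
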